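(* Let $H$ be a complex Hilbert space, let $R \in \mathcal{L}(H)$ be an isometry (i.e. $\|Rx\| = \|x\|$ for all $x\in H$), and let $T \in \mathcal{L}(H)$ satisfy the property $\mathcal{AN}^*$. Then $TR$ and $RT$ satisfy the property $\mathcal{AN}^*$.
   Context: $\mathcal{L}(H)$ is the space of bounded linear operators on $H$. For a closed subspace $M \neq \{0\}$ of $H$ and $T \in \mathcal{L}(H)$, write $[T|_M] := \inf\{\|Tx\| : x \in M, \|x\|=1\}$; $T|_M$ satisfies the property $\mathcal{N}^*$ if there exists $x_0 \in M$ with $\|x_0\| = 1$ and $\|Tx_0\| = [T|_M]$. $T$ satisfies the property $\mathcal{AN}^*$ if for every closed subspace $M \neq \{0\}$ of $H$, $T|_M$ satisfies $\mathcal{N}^*$. *)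

theory Defs
  imports "HOL-Analysis.Analysis"
begin

text \<open>A complex Hilbert space is modelled as a real Hilbert space (type class
  real_inner + complete_space) equipped with an orthogonal complex structure J
  (multiplication by the imaginary unit): J is real-linear, J (J x) = - x and
  J preserves the real inner product.  Complex scalar multiplication is then
  (a + i b) x = a x + b J x, the norm is unchanged.\<close>

definition complex_structure :: "('a::real_inner \<Rightarrow> 'a) \<Rightarrow> bool" where
  "complex_structure J \<longleftrightarrow> linear J \<and> (\<forall>x. J (J x) = - x) \<and> (\<forall>x y. inner (J x) (J y) = inner x y)"

definition scaleJ :: "('a::real_vector \<Rightarrow> 'a) \<Rightarrow> complex \<Rightarrow> 'a \<Rightarrow> 'a" where
  "scaleJ J c x = Re c *\<^sub>R x + Im c *\<^sub>R J x"

definition csubspace :: "('a::real_vector \<Rightarrow> 'a) \<Rightarrow> 'a set \<Rightarrow> bool" where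
  "csubspace J M \<longleftrightarrow> 0 \<in> M \<and> (\<forall>x\<in>M. \<forall>y\<in>M. x + y \<in> M) \<and> (\<forall>c x. x \<in> M \<longrightarrow> scaleJ J c x \<in> M)"

definition bounded_clinearJ :: "('a::real_normed_vector \<Rightarrow> 'a) \<Rightarrow> ('a \<Rightarrow> 'a) \<Rightarrow> bool" where
  "bounded_clinearJ J T \<longleftrightarrow> bounded_linear T \<and> (\<forall>c x. T (scaleJ J c x) = scaleJ J c (T x))"

definition restr_lower_bound :: "('a::real_normed_vector \<Rightarrow> 'a) \<Rightarrow> 'a set \<Rightarrow> real" where
  "restr_lower_bound T M = Inf {norm (T x) | x. x \<in> M \<and> norm x = 1}"

definition N_star :: "('a::real_normed_vector \<Rightarrow> 'a) \<Rightarrow> 'a set \<Rightarrow> bool" where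
  "N_star T M \<longleftrightarrow> (\<exists>x0\<in>M. norm x0 = 1 \<and> norm (T x0) = restr_lower_bound T M)"

definition AN_star :: "('a::real_normed_vector \<Rightarrow> 'a) \<Rightarrow> ('a \<Rightarrow> 'a) \<Rightarrow> bool" where
  "AN_star J T \<longleftrightarrow> (\<forall>M. csubspace J M \<and> closed M \<and> M \<noteq> {0} \<longrightarrow> N_star T M)"

end

theory Submission
  imports Defs
begin

lemma csub_subspace:
  assumes "csubspace J M" shows "subspace M"
  unfolding subspace_def
proof (intro conjI ballI allI)
  show "0 \<in> M" using assms by (simp add: csubspace_def)
  fix x y assume "x \<in> M" "y \<in> M" thus "x + y \<in> M" using assms by (simp add: csubspace_def)
next
  fix c :: real and x assume "x \<in> M"
  hence "scaleJ J (of_real c) x \<in> M" using assms by (simp add: csubspace_def)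
  thus "c *\<^sub>R x \<in> M" by (simp add: scaleJ_def)
qed

lemma RT_part:
  assumes "\<forall>x. norm (R x) = norm x" and "N_star T M"
  shows "N_star (R \<circ> T) M"
proof -
  have "restr_lower_bound (R \<circ> T) M = restr_lower_bound T M"
    unfolding restr_lower_bound_def using assms(1) by simp
  thus ?thesis using assms unfolding N_star_def by auto
qed

theorem proposition3p3:
  fixes J R T :: "'a::{real_inner, complete_space} \<Rightarrow> 'a"
  assumes "complex_structure J"
    and "bounded_clinearJ J R"
    and "\<forall>x. norm (R x) = norm x"
    and "bounded_clinearJ J T"
    and "AN_star J T"
  shows "AN_star J (T \<circ> R) \<and> AN_star J (R \<circ> T)"
proof
  show "AN_star J (R \<circ> T)" using assms(3,5) RT_part unfolding AN_star_def by blast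
next
  have bl: "bounded_linear R" and cl: "\<And>c x. R (scaleJ J c x) = scaleJ J c (R x)"
    using assms(2) by (auto simp: bounded_clinearJ_def)
  interpret R: bounded_linear R by (rule bl)
  show "AN_star J (T \<circ> R)" unfolding AN_star_def
  proof (intro allI impI)
    fix M assume M: "csubspace J M \<and> closed M \<and> M \<noteq> {0}"
    have cs: "csubspace J (R ` M)" unfolding csubspace_def
    proof (intro conjI allI impI ballI)
      show "0 \<in> R ` M" using M R.zero unfolding csubspace_def by (metis image_eqI)
    next
      fix a b assume "a \<in> R ` M" "b \<in> R ` M"
      then obtain u v where "u \<in> M" "v \<in> M" "a = R u" "b = R v" by blast
      moreover have "u + v \<in> M" using M calculation unfolding csubspace_def by blast
      ultimately show "a + b \<in> R ` M" using R.add by (metis image_eqI)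
    next
      fix c a assume "a \<in> R ` M"
      then obtain u where "u \<in> M" "a = R u" by blast
      moreover have "scaleJ J c u \<in> M" using M calculation unfolding csubspace_def by blast
      ultimately show "scaleJ J c a \<in> R ` M" using cl by (metis image_eqI)
    qed
    have "complete M" using M complete_eq_closed by blast
    hence "complete (R ` M)"
      using complete_isometric_image[of 1 M R] csub_subspace M bl assms(3) by auto
    hence clo: "closed (R ` M)" by (rule complete_imp_closed)
    obtain z where z: "z \<in> M" "z \<noteq> 0" using M csubspace_def by blast
    have "R z \<noteq> 0" using z assms(3) by (metis norm_eq_zero)
    hence "R ` M \<noteq> {0}" using z by auto
    hence "N_star T (R ` M)" using assms(5) cs clo unfolding AN_star_def by blast
    then obtain y where y: "y \<in> R ` M" "norm y = 1" "norm (T y) = restr_lower_bound T (R ` M)"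
      unfolding N_star_def by blast
    then obtain x where x: "x \<in> M" "y = R x" by auto
    have "{norm (T x) | x. x \<in> R ` M \<and> norm x = 1} = {norm ((T \<circ> R) x) | x. x \<in> M \<and> norm x = 1}"
      using assms(3) by auto
    hence "restr_lower_bound T (R ` M) = restr_lower_bound (T \<circ> R) M"
      unfolding restr_lower_bound_def by simp
    thus "N_star (T \<circ> R) M" unfolding N_star_def using x y assms(3) by auto
  qed
qed

end
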